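(* Let $F:\mathcal{H}\to\mathbb{R}$ be differentiable with $L$-Lipschitz gradient, $\arg\min F\ne\emptyset$, satisfying (PL) with $\mu>0$, and let $x(\cdot)$ be the solution of the heavy ball system with damping $\alpha>0$ and initial point $x_0$. Let $a,\delta\ge0$, $R:=\alpha-a+\delta$, and assume $R>0$, $aR\le2\mu$ and $L-\alpha\delta+\frac\delta2R\le0$. Then for all $t>0$, $$F(x(t))-F_*\le C(t)e^{-mt},\qquad m=\min\{a,R\},$$ where $C(t)=(F(x_0)-F_* )\big(1+\frac{a}{|a-R|}\big)$ if $a\ne R$, and $C(t)=(F(x_0)-F_* )(1+at)$ if $a=R$.
   Context: (PL) with constant $\mu>0$: $F(x)-F_*\le \frac{1}{2\mu}\|\nabla F(x)\|^2$ for all $x$, where $F_*=\min F$. Heavy ball system: $\ddot x(t)+\alpha\dot x(t)+\nabla F(x(t))=0$, $x(0)=x_0$, $\dot x(0)=0$ (unique $C^2$ global solution). *)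

theory Defs
  imports "HOL-Analysis.Analysis"
begin

end

theory Submission
  imports Defs
begin

lemma dini_mono:
  fixes \<phi> :: "real \<Rightarrow> real" and T :: real
  assumes cont: "continuous_on {0..T} \<phi>"
    and D: "\<And>s \<epsilon>. 0 \<le> s \<Longrightarrow> s < T \<Longrightarrow> \<epsilon> > 0 \<Longrightarrow>
              \<exists>d>0. \<forall>u. s < u \<and> u < s + d \<longrightarrow> \<phi> u \<le> \<phi> s + \<epsilon> * (u - s)"
    and T: "T \<ge> 0"
  shows "\<phi> T \<le> \<phi> 0"
proof -
  have key: "\<phi> T \<le> \<phi> 0 + \<epsilon> * T" if e: "\<epsilon> > 0" for \<epsilon>
  proof (rule ccontr)
    assume neg: "\<not> \<phi> T \<le> \<phi> 0 + \<epsilon> * T"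
    define \<psi> where "\<psi> u = \<phi> u - \<phi> 0 - \<epsilon> * u" for u
    define S where "S = {0..T} \<inter> \<psi> -` {..0}"
    have cpsi: "continuous_on {0..T} \<psi>" unfolding \<psi>_def
      by (intro continuous_intros cont)
    have clS: "closed S" unfolding S_def
      by (rule continuous_closed_preimage[OF cpsi]) auto
    have 0: "0 \<in> S" using T by (simp add: S_def \<psi>_def)
    have bdd: "bdd_above S" unfolding S_def by (auto intro: bdd_aboveI[of _ T])
    define c where "c = Sup S"
    have cS: "c \<in> S" unfolding c_def using closed_contains_Sup[OF _ bdd clS] 0 by blast
    hence c0: "0 \<le> c" "c \<le> T" "\<psi> c \<le> 0" by (auto simp: S_def)
    have "c \<noteq> T" using cS neg by (auto simp: S_def \<psi>_def)
    hence cT: "c < T" using c0 by simp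
    obtain d where d: "d > 0" "\<And>u. c < u \<and> u < c + d \<Longrightarrow> \<phi> u \<le> \<phi> c + \<epsilon> * (u - c)"
      using D[OF c0(1) cT e] by blast
    define u where "u = min (c + d/2) T"
    have u: "c < u" "u < c + d" "u \<le> T" using d cT by (auto simp: u_def)
    have "\<psi> u \<le> \<psi> c" using d(2)[of u] u by (simp add: \<psi>_def algebra_simps)
    hence "u \<in> S" using u c0 by (auto simp: S_def)
    hence "u \<le> c" unfolding c_def by (rule cSup_upper[OF _ bdd])
    thus False using u by simp
  qed
  show ?thesis
  proof (rule ccontr)
    assume "\<not> \<phi> T \<le> \<phi> 0"
    hence g: "\<phi> T - \<phi> 0 > 0" by simp
    define \<epsilon> where "\<epsilon> = (\<phi> T - \<phi> 0) / (2 * (T + 1))"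
    have e: "\<epsilon> > 0" using g T by (simp add: \<epsilon>_def)
    have q: "T / (2 * (T + 1)) < 1" using T by (simp add: field_simps)
    have "\<epsilon> * T = (\<phi> T - \<phi> 0) * (T / (2 * (T + 1)))" by (simp add: \<epsilon>_def)
    also have "\<dots> < (\<phi> T - \<phi> 0) * 1" by (rule mult_strict_left_mono[OF q g])
    finally have "\<epsilon> * T < \<phi> T - \<phi> 0" by simp
    thus False using key[OF e] by simp
  qed
qed

lemma norm_quot_tendsto:
  fixes x :: "real \<Rightarrow> 'a::real_normed_vector"
  assumes xd: "(x has_vector_derivative w) (at s within {0..})" and s: "s \<ge> 0"
  shows "((\<lambda>u. norm (x u - x s) / (u - s)) \<longlongrightarrow> norm w) (at_right s)"
proof -
  have d: "(x has_derivative (\<lambda>h. h *\<^sub>R w)) (at s within {s<..})"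
  proof -
    have "{s<..} \<subseteq> {0..}" using s by auto
    from has_vector_derivative_within_subset[OF xd this] show ?thesis
      unfolding has_vector_derivative_def .
  qed
  hence l: "((\<lambda>u. norm ((x u - x s) - (u - s) *\<^sub>R w) / norm (u - s)) \<longlongrightarrow> 0) (at_right s)"
    unfolding has_derivative_iff_norm by auto
  have "((\<lambda>u. norm (x u - x s) / (u - s) - norm w) \<longlongrightarrow> 0) (at_right s)"
  proof (rule Lim_null_comparison[OF _ l])
    show "eventually (\<lambda>u. norm (norm (x u - x s) / (u - s) - norm w) \<le>
       norm ((x u - x s) - (u - s) *\<^sub>R w) / norm (u - s)) (at_right s)"
      unfolding eventually_at_right_field
    proof (intro exI[of _ "s+1"] conjI allI impI)
      fix u assume "s < u"
      hence us: "u - s > 0" by simp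
      have e1: "norm (x u - x s) / (u - s) - norm w = (norm (x u - x s) - norm ((u-s) *\<^sub>R w)) / (u - s)"
      proof -
        have n: "norm ((u-s) *\<^sub>R w) = (u-s) * norm w" using us by simp
        show ?thesis unfolding n using us by (simp add: diff_divide_distrib)
      qed
      have "\<bar>norm (x u - x s) - norm ((u-s) *\<^sub>R w)\<bar> \<le> norm ((x u - x s) - (u - s) *\<^sub>R w)"
        by (rule norm_triangle_ineq3)
      thus "norm (norm (x u - x s) / (u - s) - norm w) \<le>
       norm ((x u - x s) - (u - s) *\<^sub>R w) / norm (u - s)"
        using us unfolding e1 by (simp add: divide_right_mono)
    qed simp
  qed
  from tendsto_add[OF this tendsto_const[of "norm w"]] show ?thesis by simp
qed

lemma deriv_dini:
  fixes \<psi> :: "real \<Rightarrow> real"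
  assumes d: "(\<psi> has_real_derivative D) (at s within {0..})" and s: "s \<ge> 0"
    and D: "D \<le> 0" and e: "\<epsilon> > 0"
  shows "\<exists>d>0. \<forall>u. s < u \<and> u < s + d \<longrightarrow> \<psi> u \<le> \<psi> s + \<epsilon> * (u - s)"
proof -
  have "((\<lambda>u. (\<psi> u - \<psi> s) / (u - s)) \<longlongrightarrow> D) (at s within {0..})"
    using d unfolding has_field_derivative_iff .
  hence "((\<lambda>u. (\<psi> u - \<psi> s) / (u - s)) \<longlongrightarrow> D) (at_right s)"
    by (rule tendsto_within_subset) (use s in auto)
  hence "eventually (\<lambda>u. (\<psi> u - \<psi> s) / (u - s) < \<epsilon>) (at_right s)"
    by (rule order_tendstoD) (use D e in simp)
  then obtain b where b: "b > s" "\<And>u. u > s \<Longrightarrow> u < b \<Longrightarrow> (\<psi> u - \<psi> s) / (u - s) < \<epsilon>"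
    unfolding eventually_at_right_field by blast
  show ?thesis
  proof (intro exI[of _ "b - s"] conjI allI impI)
    fix u assume u: "s < u \<and> u < s + (b - s)"
    hence "(\<psi> u - \<psi> s) / (u - s) < \<epsilon>" using b by auto
    thus "\<psi> u \<le> \<psi> s + \<epsilon> * (u - s)" using u by (simp add: field_simps)
  qed (use b in simp)
qed

theorem lemma6p3:
  fixes F :: "'a::{real_inner,complete_space} \<Rightarrow> real"
    and gradF :: "'a \<Rightarrow> 'a"
    and x v :: "real \<Rightarrow> 'a"
    and x0 :: 'a
    and L \<mu> \<alpha> a \<delta> t :: real
  assumes grad: "\<And>y. (F has_derivative (\<lambda>h. gradF y \<bullet> h)) (at y)"
    and lip: "\<And>y z. norm (gradF y - gradF z) \<le> L * norm (y - z)"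
    and argmin_ne: "\<exists>xm. \<forall>y. F xm \<le> F y"
    and mu_pos: "\<mu> > 0"
    and PL: "\<And>y. F y - (INF z. F z) \<le> 1 / (2 * \<mu>) * (norm (gradF y))\<^sup>2"
    and alpha_pos: "\<alpha> > 0"
    and x_init: "x 0 = x0"
    and v_init: "v 0 = 0"
    and x_deriv: "\<And>s. s \<ge> 0 \<Longrightarrow> (x has_vector_derivative v s) (at s within {0..})"
    and v_deriv: "\<And>s. s \<ge> 0 \<Longrightarrow>
        (v has_vector_derivative (- \<alpha> *\<^sub>R v s - gradF (x s))) (at s within {0..})"
    and a_nn: "a \<ge> 0" and delta_nn: "\<delta> \<ge> 0"
    and R_pos: "\<alpha> - a + \<delta> > 0"
    and aR: "a * (\<alpha> - a + \<delta>) \<le> 2 * \<mu>"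
    and cond: "L - \<alpha> * \<delta> + \<delta> / 2 * (\<alpha> - a + \<delta>) \<le> 0"
    and t_pos: "t > 0"
  shows "F (x t) - (INF z. F z) \<le>
           (if a \<noteq> \<alpha> - a + \<delta>
            then (F x0 - (INF z. F z)) * (1 + a / \<bar>a - (\<alpha> - a + \<delta>)\<bar>)
            else (F x0 - (INF z. F z)) * (1 + a * t))
           * exp (- min a (\<alpha> - a + \<delta>) * t)"
proof -
  define Fi where "Fi = (INF z. F z)"
  define R where "R = \<alpha> - a + \<delta>"
  define g where "g = gradF"
  define f where "f u = F (x u) - Fi" for u
  define f0 where "f0 = F x0 - Fi"
  obtain xm where xm: "\<And>y. F xm \<le> F y" using argmin_ne by blast
  have bdd: "bdd_below (range F)" using xm by (intro bdd_belowI[of _ "F xm"]) auto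
  have fnn: "F y - Fi \<ge> 0" for y unfolding Fi_def using cINF_lower[OF bdd] by simp
  have PL2: "a * R * (F y - Fi) \<le> g y \<bullet> g y" for y
  proof -
    have "a * R * (F y - Fi) \<le> 2 * \<mu> * (F y - Fi)"
      using aR fnn[of y] unfolding R_def by (intro mult_right_mono) auto
    also have "\<dots> \<le> (norm (gradF y))\<^sup>2" using PL[of y] mu_pos unfolding Fi_def
      by (simp add: field_simps)
    finally show ?thesis by (simp add: g_def power2_norm_eq_inner)
  qed
  have gcont: "isCont g y" for y
  proof -
    have "((\<lambda>z. g z - g y) \<longlongrightarrow> 0) (at y)"
    proof (rule Lim_null_comparison)
      show "eventually (\<lambda>z. norm (g z - g y) \<le> L * norm (z - y)) (at y)"
        using lip unfolding g_def by auto
      show "((\<lambda>z. L * norm (z - y)) \<longlongrightarrow> 0) (at y)"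
        by (auto intro!: tendsto_eq_intros)
    qed
    thus ?thesis unfolding isCont_def by (simp add: LIM_zero_iff)
  qed
  have Fd: "(F has_derivative (\<lambda>h. g y \<bullet> h)) (at y)" for y using grad unfolding g_def .
  have Fcont: "isCont F y" for y using has_derivative_continuous[OF Fd] .
  have xc: "continuous (at s within {0..}) x" if "s \<ge> 0" for s
    using has_vector_derivative_continuous[OF x_deriv[OF that]] .
  have vc: "continuous (at s within {0..}) v" if "s \<ge> 0" for s
    using has_vector_derivative_continuous[OF v_deriv[OF that]] .
  have xcon: "continuous_on {0..} x" using xc by (simp add: continuous_on_eq_continuous_within)
  have vcon: "continuous_on {0..} v" using vc by (simp add: continuous_on_eq_continuous_within)
  have gxcon: "continuous_on {0..} (\<lambda>u. g (x u))"
    by (rule continuous_on_compose2[OF _ xcon, of UNIV]) (auto intro: continuous_at_imp_continuous_on gcont)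
  have Fxcon: "continuous_on {0..} (\<lambda>u. F (x u))"
    by (rule continuous_on_compose2[OF _ xcon, of UNIV]) (auto intro: continuous_at_imp_continuous_on Fcont)
  have fd: "(f has_real_derivative (g (x s) \<bullet> v s)) (at s within {0..})" if s: "s \<ge> 0" for s
  proof -
    have "((\<lambda>u. F (x u)) has_derivative (\<lambda>h. g (x s) \<bullet> (h *\<^sub>R v s))) (at s within {0..})"
      using has_derivative_compose[OF x_deriv[OF s, unfolded has_vector_derivative_def] Fd] .
    hence "((\<lambda>u. F (x u) - Fi) has_derivative (\<lambda>h. (g (x s) \<bullet> v s) * h)) (at s within {0..})"
      by (auto intro!: derivative_eq_intros simp: fun_eq_iff)
    thus ?thesis unfolding has_field_derivative_def f_def .
  qed
  define W where "W u = a * f u + \<delta> / 2 * (v u \<bullet> v u) + g (x u) \<bullet> v u" for u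
  define \<phi> where "\<phi> u = exp (R * u) * W u" for u
  have stage1: "W T \<le> a * f0 * exp (- R * T)" if T: "T \<ge> 0" for T
  proof -
    have "\<phi> T \<le> \<phi> 0"
    proof (rule dini_mono[OF _ _ T])
      show "continuous_on {0..T} \<phi>"
        by (rule continuous_on_subset[of "{0..}"])
          (auto simp: \<phi>_def W_def f_def intro!: continuous_intros Fxcon vcon gxcon)
    next
      fix s \<epsilon> :: real assume s: "0 \<le> s" and "s < T" and e: "\<epsilon> > 0"
      define G where "G = g (x s)"
      define v' where "v' = - \<alpha> *\<^sub>R v s - g (x s)"
      define w where "w u = a * f u + \<delta> / 2 * (v u \<bullet> v u) + G \<bullet> v u" for u
      define \<rho> where "\<rho> u = exp (R * u) * w u" for u
      define w' where "w' = a * (G \<bullet> v s) + \<delta> / 2 * (2 * (v s \<bullet> v')) + G \<bullet> v'"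
      have vd: "(v has_derivative (\<lambda>h. h *\<^sub>R v')) (at s within {0..})"
        using v_deriv[OF s] unfolding has_vector_derivative_def v'_def g_def .
      have d1: "((\<lambda>u. v u \<bullet> v u) has_real_derivative (2 * (v s \<bullet> v'))) (at s within {0..})"
        unfolding has_field_derivative_def
        by (rule has_derivative_eq_rhs[OF has_derivative_inner[OF vd vd]])
          (auto simp: fun_eq_iff inner_commute algebra_simps)
      have d2: "((\<lambda>u. G \<bullet> v u) has_real_derivative (G \<bullet> v')) (at s within {0..})"
        unfolding has_field_derivative_def
        by (rule has_derivative_eq_rhs[OF has_derivative_inner[OF has_derivative_const vd]])
          (auto simp: fun_eq_iff algebra_simps)
      have fds: "(f has_real_derivative (G \<bullet> v s)) (at s within {0..})" using fd[OF s] by (simp add: G_def)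
      have wd: "(w has_real_derivative w') (at s within {0..})"
        unfolding w_def w'_def
        by (intro DERIV_add DERIV_cmult fds d1 d2)
      have \<rho>d: "(\<rho> has_real_derivative (R * exp (R * s) * w s + exp (R * s) * w')) (at s within {0..})"
        unfolding \<rho>_def
        by (auto intro!: derivative_eq_intros wd)
      define Q where "Q = R * exp (R * s) * w s + exp (R * s) * w' + L * exp (R * s) * norm (v s) * norm (v s)"
      have Qle: "Q \<le> 0"
      proof -
        have "R * w s + w' + L * (v s \<bullet> v s) =
            a * R * f s + (L - \<alpha> * \<delta> + \<delta> / 2 * R) * (v s \<bullet> v s) + (R + a - \<delta> - \<alpha>) * (G \<bullet> v s) - G \<bullet> G"
          unfolding w_def w'_def v'_def G_def
          by (simp add: inner_diff_right inner_add_right inner_commute algebra_simps)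
        also have "\<dots> \<le> 0"
        proof -
          have "(L - \<alpha> * \<delta> + \<delta> / 2 * R) * (v s \<bullet> v s) \<le> 0"
            using cond unfolding R_def by (intro mult_nonpos_nonneg) auto
          moreover have "R + a - \<delta> - \<alpha> = 0" unfolding R_def by simp
          moreover have "a * R * f s \<le> G \<bullet> G" using PL2 unfolding f_def G_def by simp
          ultimately show ?thesis by simp
        qed
        finally have "R * w s + w' + L * (v s \<bullet> v s) \<le> 0" .
        hence "exp (R * s) * (R * w s + w' + L * (v s \<bullet> v s)) \<le> 0"
          by (intro mult_nonneg_nonpos) auto
        thus ?thesis unfolding Q_def by (simp add: power2_norm_eq_inner[symmetric] power2_eq_square algebra_simps)
      qed
      define q where "q u = (\<rho> u - \<rho> s) / (u - s) + L * exp (R * u) * norm (v u) * (norm (x u - x s) / (u - s))" for u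
      have lim1: "((\<lambda>u. (\<rho> u - \<rho> s) / (u - s)) \<longlongrightarrow> R * exp (R * s) * w s + exp (R * s) * w') (at_right s)"
        by (rule tendsto_within_subset[OF \<rho>d[unfolded has_field_derivative_iff]]) (use s in auto)
      have vt: "(v \<longlongrightarrow> v s) (at_right s)"
        by (rule tendsto_within_subset[OF vc[OF s, unfolded continuous_within]]) (use s in auto)
      have lim2: "((\<lambda>u. L * exp (R * u) * norm (v u) * (norm (x u - x s) / (u - s))) \<longlongrightarrow>
           L * exp (R * s) * norm (v s) * norm (v s)) (at_right s)"
        by (intro tendsto_intros vt norm_quot_tendsto[OF x_deriv[OF s] s])
      have "(q \<longlongrightarrow> Q) (at_right s)" unfolding q_def Q_def by (intro tendsto_add lim1 lim2)
      hence "eventually (\<lambda>u. q u < \<epsilon>) (at_right s)"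
        by (rule order_tendstoD) (use Qle e in simp)
      then obtain b where b: "b > s" "\<And>u. u > s \<Longrightarrow> u < b \<Longrightarrow> q u < \<epsilon>"
        unfolding eventually_at_right_field by blast
      show "\<exists>d>0. \<forall>u. s < u \<and> u < s + d \<longrightarrow> \<phi> u \<le> \<phi> s + \<epsilon> * (u - s)"
      proof (intro exI[of _ "b - s"] conjI allI impI)
        fix u assume u: "s < u \<and> u < s + (b - s)"
        hence qu: "q u < \<epsilon>" using b by auto
        have us: "u - s > 0" using u by simp
        have "\<phi> u - \<phi> s = (\<rho> u - \<rho> s) + exp (R * u) * ((g (x u) - G) \<bullet> v u)"
          unfolding \<phi>_def \<rho>_def W_def w_def G_def by (simp add: inner_diff_left algebra_simps)
        also have "exp (R * u) * ((g (x u) - G) \<bullet> v u) \<le> exp (R * u) * (L * norm (x u - x s) * norm (v u))"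
        proof (rule mult_left_mono)
          have "(g (x u) - G) \<bullet> v u \<le> norm (g (x u) - G) * norm (v u)" by (rule norm_cauchy_schwarz)
          also have "\<dots> \<le> L * norm (x u - x s) * norm (v u)"
            using lip[of "x u" "x s"] unfolding G_def g_def by (intro mult_right_mono) auto
          finally show "(g (x u) - G) \<bullet> v u \<le> L * norm (x u - x s) * norm (v u)" .
        qed simp
        also have "(\<rho> u - \<rho> s) + exp (R * u) * (L * norm (x u - x s) * norm (v u)) = (u - s) * q u"
        proof -
          have "(u - s) * q u = (\<rho> u - \<rho> s) + L * exp (R * u) * norm (v u) * norm (x u - x s)"
            unfolding q_def using us by (simp add: distrib_left)
          thus ?thesis by (simp add: mult_ac)
        qed
        also have "\<dots> \<le> (u - s) * \<epsilon>" using qu us by simp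
        finally show "\<phi> u \<le> \<phi> s + \<epsilon> * (u - s)" by (simp add: algebra_simps)
      qed (use b in simp)
    qed
    also have "\<phi> 0 = a * f0" unfolding \<phi>_def W_def f_def f0_def using x_init v_init by simp
    finally have "exp (R * T) * W T \<le> a * f0" unfolding \<phi>_def .
    hence "exp (- R * T) * (exp (R * T) * W T) \<le> exp (- R * T) * (a * f0)"
      by (intro mult_left_mono) auto
    thus ?thesis by (simp add: exp_minus field_simps)
  qed
  define P where "P u = (if a = R then u else (exp ((a - R) * u) - 1) / (a - R))" for u
  have Pd: "(P has_real_derivative exp ((a - R) * u)) (at u within {0..})" for u
  proof (cases "a = R")
    case True
    have "((\<lambda>u. u) has_real_derivative 1) (at u within {0..})" by (rule DERIV_ident)
    thus ?thesis using True unfolding P_def by simp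
  next
    case False
    have "((\<lambda>u. (exp ((a - R) * u) - 1) / (a - R)) has_real_derivative
           exp ((a - R) * u) * ((a - R) * 1) / (a - R)) (at u within {0..})"
      by (auto intro!: derivative_eq_intros)
    thus ?thesis using False unfolding P_def by simp
  qed
  define \<psi> where "\<psi> u = exp (a * u) * f u - a * f0 * P u" for u
  have \<psi>d: "(\<psi> has_real_derivative (a * exp (a * s) * f s + exp (a * s) * (g (x s) \<bullet> v s)
              - a * f0 * exp ((a - R) * s))) (at s within {0..})" if s: "s \<ge> 0" for s
    unfolding \<psi>_def
    by (auto intro!: derivative_eq_intros fd[OF s] Pd simp: algebra_simps)
  have Dle: "a * exp (a * s) * f s + exp (a * s) * (g (x s) \<bullet> v s) - a * f0 * exp ((a - R) * s) \<le> 0"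
    if s: "s \<ge> 0" for s
  proof -
    have "a * f s + g (x s) \<bullet> v s \<le> W s"
      unfolding W_def using delta_nn by (simp add: mult_nonneg_nonneg)
    also have "\<dots> \<le> a * f0 * exp (- R * s)" by (rule stage1[OF s])
    finally have "exp (a * s) * (a * f s + g (x s) \<bullet> v s) \<le> exp (a * s) * (a * f0 * exp (- R * s))"
      by (intro mult_left_mono) auto
    also have "\<dots> = a * f0 * exp ((a - R) * s)"
    proof -
      have "exp (a * s) * exp (- R * s) = exp ((a - R) * s)"
        by (simp add: mult_exp_exp left_diff_distrib)
      thus ?thesis by (simp add: mult_ac)
    qed
    finally show ?thesis by (simp add: algebra_simps)
  qed
  have t0: "t \<ge> 0" using t_pos by simp
  have "\<psi> t \<le> \<psi> 0"
  proof (rule dini_mono[OF _ _ t0])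
    show "continuous_on {0..t} \<psi>"
      unfolding continuous_on_eq_continuous_within
      by (auto intro: continuous_within_subset[OF DERIV_continuous[OF \<psi>d]])
  next
    fix s \<epsilon> :: real assume s: "0 \<le> s" and "s < t" and e: "\<epsilon> > 0"
    show "\<exists>d>0. \<forall>u. s < u \<and> u < s + d \<longrightarrow> \<psi> u \<le> \<psi> s + \<epsilon> * (u - s)"
      by (rule deriv_dini[OF \<psi>d[OF s] s Dle[OF s] e])
  qed
  also have "\<psi> 0 = f0" unfolding \<psi>_def P_def f_def f0_def using x_init by simp
  finally have st2: "exp (a * t) * f t \<le> f0 + a * f0 * P t" unfolding \<psi>_def by simp
  have f0nn: "f0 \<ge> 0" unfolding f0_def using fnn .
  have ft: "f t \<le> exp (- a * t) * (f0 + a * f0 * P t)"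
  proof -
    have A: "exp (- a * t) * (exp (a * t) * f t) \<le> exp (- a * t) * (f0 + a * f0 * P t)"
      using st2 by (intro mult_left_mono) auto
    have E: "exp (- a * t) * exp (a * t) = 1" using exp_minus_inverse[of "a*t"] by (simp add: mult.commute)
    have B: "exp (- a * t) * (exp (a * t) * f t) = f t" by (metis mult.assoc mult_1 E)
    show ?thesis using A unfolding B .
  qed
  define m where "m = min a R"
  have E1: "exp (- a * t) \<le> exp (- m * t)" using t_pos unfolding m_def
    by (simp add: mult_right_mono)
  have E2: "exp (- R * t) \<le> exp (- m * t)" using t_pos unfolding m_def
    by (simp add: mult_right_mono)
  show ?thesis
  proof (cases "a = R")
    case True
    have "f t \<le> exp (- a * t) * (f0 + a * f0 * t)" using ft True unfolding P_def by simp
    thus ?thesis using True unfolding f_def f0_def Fi_def[symmetric] R_def[symmetric] m_def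
      by (simp add: algebra_simps)
  next
    case False
    have Pt: "exp (- a * t) * P t = (exp (- R * t) - exp (- a * t)) / (a - R)"
    proof -
      have "exp (- a * t) * exp ((a - R) * t) = exp (- R * t)"
        by (subst mult_exp_exp) (simp add: algebra_simps)
      moreover have "exp (- a * t) * P t = (exp (- a * t) * exp ((a - R) * t) - exp (- a * t)) / (a - R)"
        using False unfolding P_def by (simp add: right_diff_distrib)
      ultimately show ?thesis by simp
    qed
    have p1: "exp (- R * t) > 0" "exp (- a * t) > 0" by auto
    have ab: "\<bar>exp (- R * t) - exp (- a * t)\<bar> \<le> exp (- m * t)"
      unfolding abs_le_iff using E1 E2 p1 by linarith
    have X: "(exp (- R * t) - exp (- a * t)) / (a - R) \<le> exp (- m * t) / \<bar>a - R\<bar>"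
    proof -
      have "(exp (- R * t) - exp (- a * t)) / (a - R) \<le> \<bar>(exp (- R * t) - exp (- a * t)) / (a - R)\<bar>"
        by (rule abs_ge_self)
      also have "\<dots> = \<bar>exp (- R * t) - exp (- a * t)\<bar> / \<bar>a - R\<bar>" by (rule abs_divide)
      also have "\<dots> \<le> exp (- m * t) / \<bar>a - R\<bar>" using ab by (rule divide_right_mono) simp
      finally show ?thesis .
    qed
    have af: "a * f0 \<ge> 0" using a_nn f0nn by simp
    have "f t \<le> exp (- a * t) * (f0 + a * f0 * P t)" by (rule ft)
    also have "\<dots> = f0 * exp (- a * t) + a * f0 * (exp (- a * t) * P t)" by (simp only: algebra_simps)
    also have "\<dots> = f0 * exp (- a * t) + a * f0 * ((exp (- R * t) - exp (- a * t)) / (a - R))"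
      by (simp only: Pt)
    also have "\<dots> \<le> f0 * exp (- m * t) + a * f0 * (exp (- m * t) / \<bar>a - R\<bar>)"
      by (rule add_mono[OF mult_left_mono[OF E1 f0nn] mult_left_mono[OF X af]])
    also have "\<dots> = f0 * (1 + a / \<bar>a - R\<bar>) * exp (- m * t)" by (simp add: algebra_simps)
    finally have fin: "f t \<le> f0 * (1 + a / \<bar>a - R\<bar>) * exp (- m * t)" .
    show ?thesis using False fin unfolding f_def f0_def Fi_def[symmetric] R_def[symmetric] m_def
      by simp
  qed
qed

end
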